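(* Let $\mathcal{R}$ be a right amenable cell space with finite stabiliser $G_0$, let $Q$ be a finite nonempty set, and let $\mathcal{F}=(F_i)_{i\in I}$ be a right Følner net in $\mathcal{R}$. Let $X\subseteq Q^M$ and let $E$ be a finite subset of $G/G_0$ with $G_0\in E$. Then $\mathrm{h}_{(F_i^{+E})_{i\in I}}(X)\leq\mathrm{h}_{\mathcal{F}}(X)$.
   Context: A cell space $\mathcal{R}$ consists of a group $G$ acting transitively on the left on a nonempty set $M$ via $\triangleright$, a point $m_0\in M$ and a family $(g_{m_0,m})_{m\in M}$ in $G$ with $g_{m_0,m}\triangleright m_0=m$. $G_0$ is the stabiliser of $m_0$ and $G/G_0$ the set of left cosets. The right semi-action $\triangleleft\colon M\times G/G_0\to M$ is $m\triangleleft gG_0=g_{m_0,m}g\triangleright m_0$; $m\triangleleft E=\{m\triangleleft e:e\in E\}$. For $A\subseteq M$, $A^{+E}=\{m\in M:(m\triangleleft E)\cap A\neq\emptyset\}$. $\mathcal{R}$ is right amenable if there is a finitely additive probability measure $\mu$ on the power set of $M$ such that $\mu(\{a\triangleleft\mathfrak{g}:a\in A\})=\mu(A)$ whenever $\mathfrak{g}\in G/G_0$, $A\subseteq M$ and $m\mapsto m\triangleleft\mathfrak{g}$ is injective on $A$. A right Følner net in $\mathcal{R}$ is a net $(F_i)_{i\in I}$ (over a directed set) of nonempty finite subsets of $M$ with $\lim_{i}\frac{|F_i\setminus\{m: m\triangleleft\mathfrak{g}\in F_i\}|}{|F_i|}=0$ for every $\mathfrak{g}\in G/G_0$. For $A\subseteq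 M$, $\pi_A\colon Q^M\to Q^A$ is restriction; for a net $\mathcal{F}'=(F'_i)_{i\in I}$ of nonempty finite subsets of $M$, $\mathrm{h}_{\mathcal{F}'}(X)=\limsup_{i\in I}\frac{\log|\pi_{F'_i}(X)|}{|F'_i|}$. *)

theory Defs
  imports Complex_Main "HOL-Algebra.Coset" "HOL-Library.Extended_Real" "HOL-Library.Liminf_Limsup"
begin

text \<open>A cell space: group G acting (on the left) on the set M via act, a base point m0
  and a family gm with gm m in G and act (gm m) m0 = m (this makes the action transitive).\<close>
definition cell_space ::
  "('g, 'b) monoid_scheme \<Rightarrow> ('g \<Rightarrow> 'm \<Rightarrow> 'm) \<Rightarrow> 'm set \<Rightarrow> 'm \<Rightarrow> ('m \<Rightarrow> 'g) \<Rightarrow> bool" where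
  "cell_space G act M m0 gm \<longleftrightarrow> group G \<and> m0 \<in> M \<and>
     (\<forall>g\<in>carrier G. \<forall>m\<in>M. act g m \<in> M) \<and>
     (\<forall>m\<in>M. act \<one>\<^bsub>G\<^esub> m = m) \<and>
     (\<forall>g\<in>carrier G. \<forall>h\<in>carrier G. \<forall>m\<in>M. act (g \<otimes>\<^bsub>G\<^esub> h) m = act g (act h m)) \<and>
     (\<forall>m\<in>M. gm m \<in> carrier G \<and> act (gm m) m0 = m)"

definition stab :: "('g, 'b) monoid_scheme \<Rightarrow> ('g \<Rightarrow> 'm \<Rightarrow> 'm) \<Rightarrow> 'm \<Rightarrow> 'g set" where
  "stab G act m0 = {g \<in> carrier G. act g m0 = m0}"

definition left_cosets :: "('g, 'b) monoid_scheme \<Rightarrow> 'g set \<Rightarrow> 'g set set" where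
  "left_cosets G H = (\<lambda>g. g <#\<^bsub>G\<^esub> H) ` carrier G"

text \<open>Right semi-action m \<triangleleft> gG0 = g_{m0,m} g \<triangleright> m0 (g any representative of the coset).\<close>
definition rsemi ::
  "('g, 'b) monoid_scheme \<Rightarrow> ('g \<Rightarrow> 'm \<Rightarrow> 'm) \<Rightarrow> 'm \<Rightarrow> ('m \<Rightarrow> 'g) \<Rightarrow> 'm \<Rightarrow> 'g set \<Rightarrow> 'm" where
  "rsemi G act m0 gm m C = act (gm m \<otimes>\<^bsub>G\<^esub> (SOME g. g \<in> C)) m0"

definition plus_set ::
  "('g, 'b) monoid_scheme \<Rightarrow> ('g \<Rightarrow> 'm \<Rightarrow> 'm) \<Rightarrow> 'm set \<Rightarrow> 'm \<Rightarrow> ('m \<Rightarrow> 'g) \<Rightarrow> 'm set \<Rightarrow> 'g set set \<Rightarrow> 'm set" where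
  "plus_set G act M m0 gm A E = {m \<in> M. (rsemi G act m0 gm m ` E) \<inter> A \<noteq> {}}"

definition right_amenable ::
  "('g, 'b) monoid_scheme \<Rightarrow> ('g \<Rightarrow> 'm \<Rightarrow> 'm) \<Rightarrow> 'm set \<Rightarrow> 'm \<Rightarrow> ('m \<Rightarrow> 'g) \<Rightarrow> bool" where
  "right_amenable G act M m0 gm \<longleftrightarrow> (\<exists>\<mu> :: 'm set \<Rightarrow> real.
     (\<forall>A. A \<subseteq> M \<longrightarrow> \<mu> A \<ge> 0) \<and> \<mu> M = 1 \<and>
     (\<forall>A B. A \<subseteq> M \<longrightarrow> B \<subseteq> M \<longrightarrow> A \<inter> B = {} \<longrightarrow> \<mu> (A \<union> B) = \<mu> A + \<mu> B) \<and>
     (\<forall>C \<in> left_cosets G (stab G act m0). \<forall>A. A \<subseteq> M \<longrightarrow>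
        inj_on (\<lambda>m. rsemi G act m0 gm m C) A \<longrightarrow>
        \<mu> ((\<lambda>a. rsemi G act m0 gm a C) ` A) = \<mu> A))"

definition directed_set :: "'i set \<Rightarrow> ('i \<Rightarrow> 'i \<Rightarrow> bool) \<Rightarrow> bool" where
  "directed_set I rel \<longleftrightarrow> I \<noteq> {} \<and> (\<forall>i\<in>I. rel i i) \<and>
     (\<forall>i\<in>I. \<forall>j\<in>I. \<forall>k\<in>I. rel i j \<longrightarrow> rel j k \<longrightarrow> rel i k) \<and>
     (\<forall>i\<in>I. \<forall>j\<in>I. \<exists>k\<in>I. rel i k \<and> rel j k)"

definition net_filter :: "'i set \<Rightarrow> ('i \<Rightarrow> 'i \<Rightarrow> bool) \<Rightarrow> 'i filter" where
  "net_filter I rel = (INF i\<in>I. principal {j \<in> I. rel i j})"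

definition right_folner_net ::
  "('g, 'b) monoid_scheme \<Rightarrow> ('g \<Rightarrow> 'm \<Rightarrow> 'm) \<Rightarrow> 'm set \<Rightarrow> 'm \<Rightarrow> ('m \<Rightarrow> 'g) \<Rightarrow>
   'i set \<Rightarrow> ('i \<Rightarrow> 'i \<Rightarrow> bool) \<Rightarrow> ('i \<Rightarrow> 'm set) \<Rightarrow> bool" where
  "right_folner_net G act M m0 gm I rel F \<longleftrightarrow> directed_set I rel \<and>
     (\<forall>i\<in>I. F i \<subseteq> M \<and> finite (F i) \<and> F i \<noteq> {}) \<and>
     (\<forall>C \<in> left_cosets G (stab G act m0).
        ((\<lambda>i. real (card (F i - {m \<in> M. rsemi G act m0 gm m C \<in> F i})) / real (card (F i)))
          \<longlongrightarrow> 0) (net_filter I rel))"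

definition proj :: "'m set \<Rightarrow> ('m \<Rightarrow> 'q) set \<Rightarrow> ('m \<Rightarrow> 'q) set" where
  "proj A X = (\<lambda>c. restrict c A) ` X"

definition net_entropy ::
  "'i set \<Rightarrow> ('i \<Rightarrow> 'i \<Rightarrow> bool) \<Rightarrow> ('i \<Rightarrow> 'm set) \<Rightarrow> ('m \<Rightarrow> 'q) set \<Rightarrow> ereal" where
  "net_entropy I rel F X =
     Limsup (net_filter I rel) (\<lambda>i. ereal (ln (real (card (proj (F i) X))) / real (card (F i))))"

end

theory Submission
  imports Defs "HOL-Library.FuncSet"
begin

lemma cs_facts:
  assumes "cell_space G act M m0 gm"
  shows "group G" "m0 \<in> M" "\<And>g m. g\<in>carrier G \<Longrightarrow> m\<in>M \<Longrightarrow> act g m \<in> M"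
    "\<And>g h m. g\<in>carrier G \<Longrightarrow> h\<in>carrier G \<Longrightarrow> m\<in>M \<Longrightarrow> act (g \<otimes>\<^bsub>G\<^esub> h) m = act g (act h m)"
    "\<And>m. m\<in>M \<Longrightarrow> gm m \<in> carrier G" "\<And>m. m\<in>M \<Longrightarrow> act (gm m) m0 = m"
    "\<And>m. m\<in>M \<Longrightarrow> act \<one>\<^bsub>G\<^esub> m = m"
  using assms unfolding cell_space_def by auto

lemma rs_coset:
  fixes G :: "('g,'b) monoid_scheme" (structure)
  assumes cs: "cell_space G act M m0 gm" and x: "x \<in> M" and k: "k \<in> carrier G"
  shows "rsemi G act m0 gm x (k <#\<^bsub>G\<^esub> stab G act m0) = act (gm x \<otimes>\<^bsub>G\<^esub> k) m0"
proof -
  interpret group G using cs_facts(1)[OF cs] .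
  let ?C = "k <#\<^bsub>G\<^esub> stab G act m0"
  have "k \<otimes> \<one> \<in> ?C" using cs_facts[OF cs] unfolding l_coset_def stab_def by auto
  hence "\<exists>g. g \<in> ?C" by blast
  hence "(SOME g. g \<in> ?C) \<in> ?C" by (rule someI_ex)
  then obtain t where t: "t \<in> stab G act m0" "(SOME g. g \<in> ?C) = k \<otimes> t"
    unfolding l_coset_def by auto
  have tc: "t \<in> carrier G" "act t m0 = m0" using t unfolding stab_def by auto
  have gx: "gm x \<in> carrier G" using cs_facts(5)[OF cs x] .
  have "rsemi G act m0 gm x ?C = act (gm x \<otimes> (k \<otimes> t)) m0"
    unfolding rsemi_def t(2) ..
  also have "gm x \<otimes> (k \<otimes> t) = (gm x \<otimes> k) \<otimes> t" using gx k tc by (simp add: m_assoc)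
  also have "act \<dots> m0 = act (gm x \<otimes> k) (act t m0)"
    using cs_facts(4)[OF cs] gx k tc cs_facts(2)[OF cs] by simp
  finally show ?thesis using tc by simp
qed

lemma rs_stab:
  fixes G :: "('g,'b) monoid_scheme" (structure)
  assumes cs: "cell_space G act M m0 gm" and x: "x \<in> M"
  shows "rsemi G act m0 gm x (stab G act m0) = x"
proof -
  interpret group G using cs_facts(1)[OF cs] .
  have "stab G act m0 = \<one> <#\<^bsub>G\<^esub> stab G act m0"
    unfolding stab_def by (rule lcos_mult_one[symmetric]) auto
  hence "rsemi G act m0 gm x (stab G act m0) = act (gm x \<otimes> \<one>) m0"
    using rs_coset[OF cs x, of \<one>] by simp
  then show ?thesis using cs_facts(5,6)[OF cs x] by simp
qed

lemma back_step:
  fixes G :: "('g,'b) monoid_scheme" (structure)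
  assumes cs: "cell_space G act M m0 gm" and m: "m \<in> M"
    and e: "e \<in> left_cosets G (stab G act m0)"
  shows "\<exists>h\<in>stab G act m0. h \<otimes> inv (SOME g. g \<in> e) \<in> carrier G \<and>
     rsemi G act m0 gm (rsemi G act m0 gm m e) ((h \<otimes> inv (SOME g. g \<in> e)) <# stab G act m0) = m
     \<and> rsemi G act m0 gm m e \<in> M"
proof -
  interpret group G using cs_facts(1)[OF cs] .
  note f = cs_facts[OF cs]
  obtain k where k: "k \<in> carrier G" "e = k <# stab G act m0" using e unfolding left_cosets_def by auto
  have st: "stab G act m0 \<subseteq> carrier G" unfolding stab_def by auto
  let ?g = "SOME g. g \<in> e"
  have ee: "e \<subseteq> carrier G" using k st l_coset_subset_G by auto
  have "k \<otimes> \<one> \<in> e" using f k unfolding l_coset_def stab_def by auto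
  hence "\<exists>g. g \<in> e" by blast
  hence gin: "?g \<in> e" by (rule someI_ex)
  hence g: "?g \<in> carrier G" using ee by auto
  define m' where "m' = rsemi G act m0 gm m e"
  have m'def: "m' = act (gm m \<otimes> ?g) m0" unfolding m'_def rsemi_def ..
  have m'M: "m' \<in> M" unfolding m'def using f g m by auto
  have gm': "gm m' \<in> carrier G" "act (gm m') m0 = m'" using f m'M by auto
  have gmm: "gm m \<in> carrier G" "act (gm m) m0 = m" using f m by auto
  define h where "h = inv (gm m') \<otimes> (gm m \<otimes> ?g)"
  have hc: "h \<in> carrier G" unfolding h_def using gm' gmm g by auto
  have "act h m0 = act (inv (gm m')) (act (gm m \<otimes> ?g) m0)"
    unfolding h_def using f gm' gmm g by auto
  also have "\<dots> = act (inv (gm m')) (act (gm m') m0)" using m'def gm' by simp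
  also have "\<dots> = act (inv (gm m') \<otimes> gm m') m0" using f(4)[of "inv (gm m')" "gm m'" m0] f(2) gm' by simp
  also have "\<dots> = m0" using gm' f(2) f(7) by simp
  finally have hs: "h \<in> stab G act m0" using hc unfolding stab_def by auto
  have hg: "h \<otimes> inv ?g \<in> carrier G" using hc g by auto
  have eq: "gm m' \<otimes> (h \<otimes> inv ?g) = gm m"
    unfolding h_def using gm' gmm g by (simp add: m_assoc[symmetric] r_inv) (simp add: m_assoc)
  have "rsemi G act m0 gm m' ((h \<otimes> inv ?g) <# stab G act m0) = act (gm m' \<otimes> (h \<otimes> inv ?g)) m0"
    using rs_coset[OF cs m'M hg] .
  also have "\<dots> = m" using eq gmm by simp
  finally show ?thesis using hs hg m'M unfolding m'_def by blast
qed

definition Dset :: "('g,'b) monoid_scheme \<Rightarrow> ('g \<Rightarrow> 'm \<Rightarrow> 'm) \<Rightarrow> 'm \<Rightarrow> 'g set set \<Rightarrow> 'g set set" where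
  "Dset G act m0 E = (\<lambda>(e,h). (h \<otimes>\<^bsub>G\<^esub> inv\<^bsub>G\<^esub> (SOME g. g \<in> e)) <#\<^bsub>G\<^esub> stab G act m0) ` (E \<times> stab G act m0)"

lemma cover:
  fixes G :: "('g,'b) monoid_scheme" (structure)
  assumes cs: "cell_space G act M m0 gm" and FM: "F \<subseteq> M"
    and E: "E \<subseteq> left_cosets G (stab G act m0)"
  shows "plus_set G act M m0 gm F E - F \<subseteq>
    (\<Union>c\<in>Dset G act m0 E. (\<lambda>x. rsemi G act m0 gm x c) ` (F - {x\<in>M. rsemi G act m0 gm x c \<in> F}))"
proof
  fix m assume a: "m \<in> plus_set G act M m0 gm F E - F"
  then obtain e where e: "e \<in> E" "rsemi G act m0 gm m e \<in> F" and m: "m \<in> M" "m \<notin> F"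
    unfolding plus_set_def by auto
  obtain h where h: "h \<in> stab G act m0"
     "rsemi G act m0 gm (rsemi G act m0 gm m e) ((h \<otimes> inv (SOME g. g \<in> e)) <# stab G act m0) = m"
    using back_step[OF cs m(1)] e E by blast
  let ?c = "(h \<otimes> inv (SOME g. g \<in> e)) <# stab G act m0"
  have c: "?c \<in> Dset G act m0 E" unfolding Dset_def using e h by force
  show "m \<in> (\<Union>c\<in>Dset G act m0 E. (\<lambda>x. rsemi G act m0 gm x c) ` (F - {x\<in>M. rsemi G act m0 gm x c \<in> F}))"
    using c h(2) e(2) m(2) by (intro UN_I[OF c]) force
qed

lemma Dset_props:
  fixes G :: "('g,'b) monoid_scheme" (structure)
  assumes cs: "cell_space G act M m0 gm"
    and E: "E \<subseteq> left_cosets G (stab G act m0)" and fE: "finite E" and fS: "finite (stab G act m0)"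
  shows "finite (Dset G act m0 E)" "Dset G act m0 E \<subseteq> left_cosets G (stab G act m0)"
proof -
  show "finite (Dset G act m0 E)" unfolding Dset_def using fE fS by auto
  show "Dset G act m0 E \<subseteq> left_cosets G (stab G act m0)"
  proof
    fix c assume "c \<in> Dset G act m0 E"
    then obtain e h where eh: "e \<in> E" "h \<in> stab G act m0"
      "c = (h \<otimes> inv (SOME g. g \<in> e)) <# stab G act m0" unfolding Dset_def by auto
    have m: "m0 \<in> M" using cs_facts(2)[OF cs] .
    from back_step[OF cs m, of e] eh E obtain h' where
      "h' \<in> stab G act m0" "h' \<otimes> inv (SOME g. g \<in> e) \<in> carrier G" by blast
    interpret group G using cs_facts(1)[OF cs] .
    have "h \<in> carrier G" using eh unfolding stab_def by auto
    moreover have "inv (SOME g. g \<in> e) \<in> carrier G"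
    proof -
      obtain k where k: "k \<in> carrier G" "e = k <# stab G act m0" using eh E unfolding left_cosets_def by auto
      have "k \<otimes> \<one> \<in> e" using cs_facts[OF cs] k unfolding l_coset_def stab_def by auto
      hence "(SOME g. g \<in> e) \<in> e" by (rule someI)
      moreover have "e \<subseteq> carrier G" using k l_coset_subset_G[of "stab G act m0" k] unfolding stab_def by auto
      ultimately show ?thesis by auto
    qed
    ultimately show "c \<in> left_cosets G (stab G act m0)" unfolding left_cosets_def eh(3) by auto
  qed
qed

lemma F_sub_plus:
  fixes G :: "('g,'b) monoid_scheme" (structure)
  assumes cs: "cell_space G act M m0 gm" and FM: "F \<subseteq> M" and s: "stab G act m0 \<in> E"
  shows "F \<subseteq> plus_set G act M m0 gm F E"
  unfolding plus_set_def using rs_stab[OF cs] FM s by force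

lemma plus_count:
  fixes G :: "('g,'b) monoid_scheme" (structure)
  assumes cs: "cell_space G act M m0 gm" and FM: "F \<subseteq> M" and fF: "finite F"
    and E: "E \<subseteq> left_cosets G (stab G act m0)" and fE: "finite E" and fS: "finite (stab G act m0)"
  shows "finite (plus_set G act M m0 gm F E)"
    "card (plus_set G act M m0 gm F E - F) \<le> (\<Sum>c\<in>Dset G act m0 E. card (F - {x\<in>M. rsemi G act m0 gm x c \<in> F}))"
proof -
  let ?U = "(\<Union>c\<in>Dset G act m0 E. (\<lambda>x. rsemi G act m0 gm x c) ` (F - {x\<in>M. rsemi G act m0 gm x c \<in> F}))"
  have fD: "finite (Dset G act m0 E)" using Dset_props[OF cs E fE fS] by simp
  have fU: "finite ?U" using fD fF by auto
  have sub: "plus_set G act M m0 gm F E - F \<subseteq> ?U" by (rule cover[OF cs FM E])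
  have "plus_set G act M m0 gm F E \<subseteq> F \<union> ?U" using sub by blast
  thus "finite (plus_set G act M m0 gm F E)" using fU fF finite_subset by blast
  have "card (plus_set G act M m0 gm F E - F) \<le> card ?U" by (rule card_mono[OF fU sub])
  also have "\<dots> \<le> (\<Sum>c\<in>Dset G act m0 E. card ((\<lambda>x. rsemi G act m0 gm x c) ` (F - {x\<in>M. rsemi G act m0 gm x c \<in> F})))"
    by (rule card_UN_le[OF fD])
  also have "\<dots> \<le> (\<Sum>c\<in>Dset G act m0 E. card (F - {x\<in>M. rsemi G act m0 gm x c \<in> F}))"
    by (intro sum_mono card_image_le) (use fF in auto)
  finally show "card (plus_set G act M m0 gm F E - F) \<le> (\<Sum>c\<in>Dset G act m0 E. card (F - {x\<in>M. rsemi G act m0 gm x c \<in> F}))" .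
qed

lemma proj_card:
  assumes AB: "A \<subseteq> B" and fB: "finite B" and BM: "B \<subseteq> M" and X: "X \<subseteq> M \<rightarrow>\<^sub>E Q" and fQ: "finite Q"
  shows "card (proj B X) \<le> card (proj A X) * card Q ^ card (B - A)"
proof -
  let ?f = "\<lambda>y. (restrict y A, restrict y (B - A))"
  have fA: "finite A" using AB fB finite_subset by blast
  have pA: "proj A X \<subseteq> A \<rightarrow>\<^sub>E Q" unfolding proj_def using X AB BM by (auto simp: PiE_iff; blast)
  have finA: "finite (proj A X)" using finite_subset[OF pA] fA fQ by (simp add: finite_PiE)
  have inj: "inj_on ?f (proj B X)"
  proof (rule inj_onI)
    fix y z assume y: "y \<in> proj B X" and z: "z \<in> proj B X" and eq: "?f y = ?f z"
    show "y = z"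
    proof
      fix x
      show "y x = z x"
      proof (cases "x \<in> B")
        case True
        then show ?thesis using eq by (cases "x \<in> A") (auto simp: restrict_def fun_eq_iff split: if_splits)
      next
        case False
        then show ?thesis using y z unfolding proj_def by auto
      qed
    qed
  qed
  have img: "?f ` proj B X \<subseteq> proj A X \<times> ((B - A) \<rightarrow>\<^sub>E Q)"
  proof
    fix w assume "w \<in> ?f ` proj B X"
    then obtain c where c: "c \<in> X" "w = ?f (restrict c B)" unfolding proj_def by auto
    have "restrict (restrict c B) A = restrict c A" using AB by (auto simp: restrict_def fun_eq_iff)
    moreover have "restrict (restrict c B) (B - A) \<in> (B - A) \<rightarrow>\<^sub>E Q"
      using c(1) X BM by (auto simp: PiE_iff; blast)
    ultimately show "w \<in> proj A X \<times> ((B - A) \<rightarrow>\<^sub>E Q)" using c unfolding proj_def by auto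
  qed
  have "card (proj B X) = card (?f ` proj B X)" using card_image[OF inj] by simp
  also have "\<dots> \<le> card (proj A X \<times> ((B - A) \<rightarrow>\<^sub>E Q))"
    by (rule card_mono[OF _ img]) (use finA fB fQ in \<open>auto simp: finite_PiE\<close>)
  also have "\<dots> = card (proj A X) * card Q ^ card (B - A)"
    using fB by (simp add: card_cartesian_product card_PiE)
  finally show ?thesis .
qed

lemma real_ineq:
  fixes P p q n d :: nat
  assumes Pp: "P \<le> p * q ^ d" and q: "q \<ge> 1" and n: "n > 0"
  shows "ln (real P) / real (n + d) \<le> ln (real p) / real n + real d / real n * ln (real q)"
proof (cases "P = 0")
  case True
  have "ln (real p) \<ge> 0" by (cases "p = 0") auto
  moreover have "ln (real q) \<ge> 0" using q by simp
  ultimately show ?thesis using True n by simp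
next
  case False
  hence p: "p \<ge> 1" using Pp by (cases "p = 0") auto
  have "real P \<le> real p * real q ^ d" using Pp by (metis of_nat_le_iff of_nat_mult of_nat_power)
  hence "ln (real P) \<le> ln (real p * real q ^ d)" using False by simp
  also have "\<dots> = ln (real p) + real d * ln (real q)" using p q by (simp add: ln_mult ln_realpow)
  finally have l: "ln (real P) \<le> ln (real p) + real d * ln (real q)" .
  have nn: "0 \<le> ln (real p) + real d * ln (real q)" using p q by simp
  have "ln (real P) / real (n + d) \<le> (ln (real p) + real d * ln (real q)) / real (n + d)"
    using l by (simp add: divide_right_mono)
  also have "\<dots> \<le> (ln (real p) + real d * ln (real q)) / real n"
    using nn n by (intro divide_left_mono) auto
  also have "\<dots> = ln (real p) / real n + real d / real n * ln (real q)" by (simp add: add_divide_distrib)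
  finally show ?thesis .
qed

theorem lemma11:
  fixes G :: "('g, 'b) monoid_scheme" and act :: "'g \<Rightarrow> 'm \<Rightarrow> 'm"
    and M :: "'m set" and m0 :: 'm and gm :: "'m \<Rightarrow> 'g"
    and Q :: "'q set" and I :: "'i set" and rel :: "'i \<Rightarrow> 'i \<Rightarrow> bool"
    and F :: "'i \<Rightarrow> 'm set" and X :: "('m \<Rightarrow> 'q) set" and E :: "'g set set"
  assumes "cell_space G act M m0 gm"
    and "right_amenable G act M m0 gm"
    and "finite (stab G act m0)"
    and "finite Q" and "Q \<noteq> {}"
    and "right_folner_net G act M m0 gm I rel F"
    and "X \<subseteq> M \<rightarrow>\<^sub>E Q"
    and "finite E" and "E \<subseteq> left_cosets G (stab G act m0)"
    and "stab G act m0 \<in> E"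
  shows "net_entropy I rel (\<lambda>i. plus_set G act M m0 gm (F i) E) X \<le> net_entropy I rel F X"
proof -
  note cs = assms(1) and fS = assms(3) and fQ = assms(4) and Qne = assms(5)
    and X = assms(7) and fE = assms(8) and E = assms(9) and sE = assms(10)
  have dir: "directed_set I rel" and FI: "\<And>i. i \<in> I \<Longrightarrow> F i \<subseteq> M \<and> finite (F i) \<and> F i \<noteq> {}"
    and fol: "\<And>C. C \<in> left_cosets G (stab G act m0) \<Longrightarrow>
        ((\<lambda>i. real (card (F i - {m \<in> M. rsemi G act m0 gm m C \<in> F i})) / real (card (F i)))
          \<longlongrightarrow> 0) (net_filter I rel)"
    using assms(6) unfolding right_folner_net_def by auto
  define N where "N = net_filter I rel"
  define Fp where "Fp i = plus_set G act M m0 gm (F i) E" for i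
  define D where "D = Dset G act m0 E"
  define q where "q = card Q"
  define a where "a i = ln (real (card (proj (Fp i) X))) / real (card (Fp i))" for i
  define b where "b i = ln (real (card (proj (F i) X))) / real (card (F i))" for i
  define r where "r c i = real (card (F i - {m \<in> M. rsemi G act m0 gm m c \<in> F i})) / real (card (F i))" for c i
  define \<delta> where "\<delta> i = real (card (Fp i - F i)) / real (card (F i)) * ln (real q)" for i
  have q1: "q \<ge> 1" unfolding q_def using fQ Qne by (simp add: Suc_le_eq card_gt_0_iff)
  have fD: "finite D" and DL: "D \<subseteq> left_cosets G (stab G act m0)"
    using Dset_props[OF cs E fE fS] unfolding D_def by auto
  have evI: "eventually (\<lambda>i. i \<in> I) N"
  proof -
    obtain i0 where "i0 \<in> I" using dir unfolding directed_set_def by auto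
    thus ?thesis unfolding N_def net_filter_def
      by (intro eventually_INF1[of i0]) (auto simp: eventually_principal)
  qed
  have pt: "a i \<le> b i + \<delta> i" and dlt: "0 \<le> \<delta> i" and dle: "\<delta> i \<le> ln (real q) * (\<Sum>c\<in>D. r c i)"
    if i: "i \<in> I" for i
  proof -
    have FM: "F i \<subseteq> M" and fF: "finite (F i)" and Fne: "F i \<noteq> {}" using FI[OF i] by auto
    have n: "card (F i) > 0" using fF Fne by (simp add: card_gt_0_iff)
    have fFp: "finite (Fp i)" and cnt: "card (Fp i - F i) \<le> (\<Sum>c\<in>D. card (F i - {x\<in>M. rsemi G act m0 gm x c \<in> F i}))"
      using plus_count[OF cs FM fF E fE fS] unfolding Fp_def D_def by auto
    have sub: "F i \<subseteq> Fp i" unfolding Fp_def by (rule F_sub_plus[OF cs FM sE])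
    have FpM: "Fp i \<subseteq> M" unfolding Fp_def plus_set_def by auto
    have cardFp: "card (Fp i) = card (F i) + card (Fp i - F i)"
      using card_Diff_subset[OF finite_subset[OF sub fFp] sub] card_mono[OF fFp sub] by simp
    have pc: "card (proj (Fp i) X) \<le> card (proj (F i) X) * q ^ card (Fp i - F i)"
      unfolding q_def by (rule proj_card[OF sub fFp FpM X fQ])
    have ri: "ln (real (card (proj (Fp i) X))) / real (card (F i) + card (Fp i - F i)) \<le>
       ln (real (card (proj (F i) X))) / real (card (F i)) + real (card (Fp i - F i)) / real (card (F i)) * ln (real q)"
      by (rule real_ineq[OF pc q1 n])
    show "a i \<le> b i + \<delta> i"
      unfolding a_def b_def \<delta>_def using ri by (simp only: cardFp)
    have lq: "ln (real q) \<ge> 0" using q1 by simp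
    show "0 \<le> \<delta> i" unfolding \<delta>_def using lq by simp
    have "real (card (Fp i - F i)) / real (card (F i)) \<le> (\<Sum>c\<in>D. r c i)"
    proof -
      have "real (card (Fp i - F i)) \<le> real (\<Sum>c\<in>D. card (F i - {x\<in>M. rsemi G act m0 gm x c \<in> F i}))"
        using cnt by (simp only: of_nat_le_iff)
      also have "\<dots> = (\<Sum>c\<in>D. real (card (F i - {x\<in>M. rsemi G act m0 gm x c \<in> F i})))"
        by (rule of_nat_sum)
      finally have "real (card (Fp i - F i)) \<le> (\<Sum>c\<in>D. real (card (F i - {x\<in>M. rsemi G act m0 gm x c \<in> F i})))" .
      hence "real (card (Fp i - F i)) / real (card (F i)) \<le> (\<Sum>c\<in>D. real (card (F i - {x\<in>M. rsemi G act m0 gm x c \<in> F i}))) / real (card (F i))"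
        using n by (simp add: divide_right_mono)
      thus ?thesis unfolding r_def by (simp add: sum_divide_distrib)
    qed
    hence "ln (real q) * (real (card (Fp i - F i)) / real (card (F i))) \<le> ln (real q) * (\<Sum>c\<in>D. r c i)"
      using lq by (rule mult_left_mono)
    thus "\<delta> i \<le> ln (real q) * (\<Sum>c\<in>D. r c i)" unfolding \<delta>_def by (simp only: mult.commute)
  qed
  have rlim: "((\<lambda>i. ln (real q) * (\<Sum>c\<in>D. r c i)) \<longlongrightarrow> 0) N"
  proof -
    have "((\<lambda>i. (\<Sum>c\<in>D. r c i)) \<longlongrightarrow> (\<Sum>c\<in>D. (0::real))) N"
      using fol DL unfolding r_def N_def by (intro tendsto_sum) auto
    hence "((\<lambda>i. (\<Sum>c\<in>D. r c i)) \<longlongrightarrow> 0) N" by simp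
    thus ?thesis using tendsto_mult_right_zero by blast
  qed
  have dlim: "(\<delta> \<longlongrightarrow> 0) N"
    by (rule tendsto_sandwich[OF _ _ tendsto_const rlim])
       (use evI dlt dle in \<open>auto elim: eventually_mono\<close>)
  show ?thesis
  proof (cases "N = bot")
    case True
    then show ?thesis unfolding net_entropy_def N_def[symmetric] by simp
  next
    case False
    have "Limsup N (\<lambda>i. ereal (a i)) \<le> Limsup N (\<lambda>i. ereal (b i))"
    proof (rule ereal_le_epsilon2)
      fix e :: real assume e: "0 < e"
      have "eventually (\<lambda>i. \<delta> i < e) N" using order_tendstoD(2)[OF dlim e] .
      hence "eventually (\<lambda>i. i \<in> I \<and> \<delta> i < e) N" using evI by (simp add: eventually_conj)
      hence "eventually (\<lambda>i. ereal (a i) \<le> ereal (b i) + ereal e) N"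
      proof (rule eventually_mono)
        fix i assume "i \<in> I \<and> \<delta> i < e"
        hence "a i \<le> b i + e" using pt[of i] by linarith
        thus "ereal (a i) \<le> ereal (b i) + ereal e" by simp
      qed
      hence "Limsup N (\<lambda>i. ereal (a i)) \<le> Limsup N (\<lambda>i. ereal (b i) + ereal e)"
        by (rule Limsup_mono)
      also have "\<dots> = Limsup N (\<lambda>i. ereal (b i)) + ereal e"
        using False by (rule Limsup_add_ereal_right) simp
      finally show "Limsup N (\<lambda>i. ereal (a i)) \<le> Limsup N (\<lambda>i. ereal (b i)) + ereal e" .
    qed
    thus ?thesis unfolding net_entropy_def N_def a_def b_def Fp_def .
  qed
qed

end
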